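(* Let $\iota_1\le\kappa_1$ and $\iota_2\le\kappa_2$ be natural numbers and let $(\iota,\kappa)=(\iota_1,\kappa_1)\wedge(\iota_2,\kappa_2)$. Then $L_{(\iota_1,\kappa_1)}\times L_{(\iota_2,\kappa_2)}\equiv_W L_{(\iota,\kappa)}$. In particular, with $L_{(0,2)}$ repeated $k\ge1$ times, the $k$-fold product $L_{(0,2)}\times\dots\times L_{(0,2)}$ is Wadge equivalent to $L_{(0,2k)}$.
   Context: For $\iota\le\kappa$, $L_{(\iota,\kappa)}\subseteq\{\iota,\dots,\kappa\}^\omega$ is the set of words in which the highest number occurring infinitely often is even. For word languages $L,M$, $L\times M=\{(x_1,y_1)(x_2,y_2)\cdots : x_1x_2\cdots\in L,\ y_1y_2\cdots\in M\}$ (words over the product alphabet). A pair $(i_1,i_2)\in\omega\times\omega$ is even if both $i_1,i_2$ are even, odd otherwise. Order $[\iota_1,\kappa_1]\times[\iota_2,\kappa_2]$ (where $[a,b]=\{a,\dots,b\}$) componentwise. For $m\in\{0,1\}$ and $n\ge m$, an alternating chain of type $(m,n)$ is a sequence $(x_m,y_m)<(x_{m+1},y_{m+1})<\dots<(x_n,y_n)$ (strict in the componentwise order) such that $(x_i,y_i)$ is even iff $i$ is even. $(\iota_1,\kappa_1)\wedge(\iota_2,\kappa_2)$ is the type of a longest alternating chain in $[\iota_1,\kappa_1]\times[\iota_2,\kappa_2]$ (this is well defined). $\equiv_W$ is mutual continuous reducibility between the Cantor-type spaces of infinite words. *)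

theory Defs
  imports Main
begin

definition words :: "'a set \<Rightarrow> (nat \<Rightarrow> 'a) set" where
  "words A = {x. \<forall>i. x i \<in> A}"

definition wcont :: "'a set \<Rightarrow> 'b set \<Rightarrow> ((nat \<Rightarrow> 'a) \<Rightarrow> (nat \<Rightarrow> 'b)) \<Rightarrow> bool" where
  "wcont A B f \<longleftrightarrow> (\<forall>x\<in>words A. f x \<in> words B) \<and>
     (\<forall>x\<in>words A. \<forall>n. \<exists>m. \<forall>y\<in>words A. (\<forall>i<m. y i = x i) \<longrightarrow> (\<forall>i<n. f y i = f x i))"

definition wadge_le :: "'a set \<Rightarrow> (nat \<Rightarrow> 'a) set \<Rightarrow> 'b set \<Rightarrow> (nat \<Rightarrow> 'b) set \<Rightarrow> bool" where
  "wadge_le A L B M \<longleftrightarrow> (\<exists>f. wcont A B f \<and> (\<forall>x\<in>words A. x \<in> L \<longleftrightarrow> f x \<in> M))"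

definition wadge_eq :: "'a set \<Rightarrow> (nat \<Rightarrow> 'a) set \<Rightarrow> 'b set \<Rightarrow> (nat \<Rightarrow> 'b) set \<Rightarrow> bool" where
  "wadge_eq A L B M \<longleftrightarrow> wadge_le A L B M \<and> wadge_le B M A L"

definition parity_lang :: "nat \<Rightarrow> nat \<Rightarrow> (nat \<Rightarrow> nat) set" where
  "parity_lang \<iota> \<kappa> = {x \<in> words {\<iota>..\<kappa>}. even (Max {a \<in> {\<iota>..\<kappa>}. infinite {i. x i = a}})}"

definition lang_prod :: "(nat \<Rightarrow> 'a) set \<Rightarrow> (nat \<Rightarrow> 'b) set \<Rightarrow> (nat \<Rightarrow> 'a \<times> 'b) set" where
  "lang_prod L M = {x. (\<lambda>i. fst (x i)) \<in> L \<and> (\<lambda>i. snd (x i)) \<in> M}"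

definition even_pair :: "nat \<times> nat \<Rightarrow> bool" where
  "even_pair p \<longleftrightarrow> even (fst p) \<and> even (snd p)"

definition pair_less :: "nat \<times> nat \<Rightarrow> nat \<times> nat \<Rightarrow> bool" where
  "pair_less p q \<longleftrightarrow> fst p \<le> fst q \<and> snd p \<le> snd q \<and> p \<noteq> q"

definition alt_chain :: "nat \<Rightarrow> nat \<Rightarrow> nat \<Rightarrow> nat \<Rightarrow> nat \<Rightarrow> nat \<Rightarrow> bool" where
  "alt_chain i1 k1 i2 k2 m n \<longleftrightarrow> m \<in> {0,1} \<and> m \<le> n \<and>
     (\<exists>c :: nat \<Rightarrow> nat \<times> nat.
        (\<forall>j\<in>{m..n}. c j \<in> {i1..k1} \<times> {i2..k2} \<and> (even_pair (c j) \<longleftrightarrow> even j)) \<and>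
        (\<forall>j\<in>{m..<n}. pair_less (c j) (c (Suc j))))"

definition chain_meet :: "nat \<times> nat \<Rightarrow> nat \<times> nat \<Rightarrow> nat \<times> nat" where
  "chain_meet p q = (THE t. alt_chain (fst p) (snd p) (fst q) (snd q) (fst t) (snd t) \<and>
      (\<forall>m' n'. alt_chain (fst p) (snd p) (fst q) (snd q) m' n' \<longrightarrow> n' - m' \<le> snd t - fst t))"

definition tuple_alph :: "nat \<Rightarrow> nat set \<Rightarrow> (nat \<Rightarrow> nat) set" where
  "tuple_alph k A = {v. (\<forall>j<k. v j \<in> A) \<and> (\<forall>j\<ge>k. v j = 0)}"

definition lang_pow :: "nat \<Rightarrow> (nat \<Rightarrow> nat) set \<Rightarrow> (nat \<Rightarrow> (nat \<Rightarrow> nat)) set" where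
  "lang_pow k L = {x. \<forall>j<k. (\<lambda>i. x i j) \<in> L}"

end

theory Submission
  imports Defs "HOL-Library.Infinite_Set"
begin


lemma infset_image:
  assumes A: "finite A" and x: "x \<in> words A" and phi: "\<phi> ` A \<subseteq> C"
  shows "{c\<in>C. infinite {i. \<phi> (x i) = c}} = \<phi> ` {a\<in>A. infinite {i. x i = a}}"
proof
  show "{c\<in>C. infinite {i. \<phi> (x i) = c}} \<subseteq> \<phi> ` {a\<in>A. infinite {i. x i = a}}"
  proof
    fix c assume c: "c \<in> {c\<in>C. infinite {i. \<phi> (x i) = c}}"
    have eq: "{i. \<phi> (x i) = c} = (\<Union>a\<in>{a\<in>A. \<phi> a = c}. {i. x i = a})"
      using x by (auto simp: words_def)
    show "c \<in> \<phi> ` {a\<in>A. infinite {i. x i = a}}"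
    proof (rule ccontr)
      assume "c \<notin> \<phi> ` {a\<in>A. infinite {i. x i = a}}"
      then have "\<forall>a\<in>{a\<in>A. \<phi> a = c}. finite {i. x i = a}" by auto
      then have "finite (\<Union>a\<in>{a\<in>A. \<phi> a = c}. {i. x i = a})" using A by auto
      then show False using c eq by auto
    qed
  qed
next
  show "\<phi> ` {a\<in>A. infinite {i. x i = a}} \<subseteq> {c\<in>C. infinite {i. \<phi> (x i) = c}}"
  proof
    fix c assume "c \<in> \<phi> ` {a\<in>A. infinite {i. x i = a}}"
    then obtain a where a: "a \<in> A" "infinite {i. x i = a}" "c = \<phi> a" by auto
    have "{i. x i = a} \<subseteq> {i. \<phi> (x i) = c}" using a by auto
    then have "infinite {i. \<phi> (x i) = c}" using a infinite_super by blast
    then show "c \<in> {c\<in>C. infinite {i. \<phi> (x i) = c}}" using a phi by auto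
  qed
qed

lemma max_infset:
  assumes C: "finite C" and y: "y \<in> words C" and inf: "\<forall>T. \<exists>i\<ge>T. y i = a"
    and ev: "\<exists>T. \<forall>i\<ge>T. y i \<le> a"
  shows "Max {c\<in>C. infinite {i. y i = c}} = a"
proof (rule Max_eqI)
  show "finite {c\<in>C. infinite {i. y i = c}}" using C by auto
  obtain i where "y i = a" using inf by auto
  then have "a \<in> C" using y by (auto simp: words_def)
  moreover have "infinite {i. y i = a}" using inf by (auto simp: infinite_nat_iff_unbounded_le)
  ultimately show "a \<in> {c\<in>C. infinite {i. y i = c}}" by auto
next
  fix c assume "c \<in> {c\<in>C. infinite {i. y i = c}}"
  then have "infinite {i. y i = c}" by auto
  moreover obtain T where T: "\<forall>i\<ge>T. y i \<le> a" using ev by auto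
  ultimately obtain i where "i \<ge> T" "y i = c" by (auto simp: infinite_nat_iff_unbounded_le)
  then show "c \<le> a" using T by auto
qed

lemma max_image_mono:
  fixes \<phi> :: "nat \<Rightarrow> nat"
  assumes "finite S" "S \<noteq> {}" "\<And>a b. a \<in> S \<Longrightarrow> b \<in> S \<Longrightarrow> a \<le> b \<Longrightarrow> \<phi> a \<le> \<phi> b"
  shows "Max (\<phi> ` S) = \<phi> (Max S)"
  using assms by (intro Max_eqI) (auto intro: assms(3) Max_ge Max_in)

lemma ex_inf_letter:
  assumes A: "finite A" and x: "x \<in> words A"
  shows "\<exists>a\<in>A. infinite {i. x i = a}"
proof (rule ccontr)
  assume "\<not> ?thesis"
  then have "finite (\<Union>a\<in>A. {i. x i = a})" using A by auto
  moreover have "(\<Union>a\<in>A. {i. x i = a}) = UNIV" using x by (auto simp: words_def)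
  ultimately show False by simp
qed

lemma finite_choice_bound:
  fixes P :: "'a \<Rightarrow> nat \<Rightarrow> bool"
  assumes "finite S" "\<forall>a\<in>S. \<exists>t. P a t"
  shows "\<exists>N. \<forall>a\<in>S. \<exists>t<N. P a t"
  using assms
proof (induction S rule: finite_induct)
  case empty then show ?case by auto
next
  case (insert b F)
  then obtain N where N: "\<forall>a\<in>F. \<exists>t<N. P a t" by auto
  obtain t where t: "P b t" using insert by auto
  have "\<forall>a\<in>insert b F. \<exists>s<max N (Suc t). P a s"
  proof
    fix a assume "a \<in> insert b F"
    then show "\<exists>s<max N (Suc t). P a s"
    proof
      assume "a = b" then show ?thesis using t by (intro exI[of _ t]) auto
    next
      assume "a \<in> F" then obtain s where "s < N" "P a s" using N by auto
      then show ?thesis by (intro exI[of _ s]) auto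
    qed
  qed
  then show ?case by blast
qed

definition prv :: "(nat \<Rightarrow> 'a) \<Rightarrow> nat \<Rightarrow> nat" where
  "prv x i = (if \<exists>j<i. x j = x i then Max {j. j < i \<and> x j = x i} else 0)"

definition wnd :: "(nat \<Rightarrow> 'a) \<Rightarrow> nat \<Rightarrow> 'a set" where
  "wnd x i = x ` {prv x i..i}"

lemma prv_le: "prv x i \<le> i"
proof (cases "\<exists>j<i. x j = x i")
  case True
  have "Max {j. j < i \<and> x j = x i} \<in> {j. j < i \<and> x j = x i}"
    using True by (intro Max_in) auto
  then show ?thesis using True by (simp add: prv_def)
qed (auto simp: prv_def)

lemma prv_lt: "\<exists>j<i. x j = x i \<Longrightarrow> prv x i < i"
proof -
  assume True: "\<exists>j<i. x j = x i"
  have "Max {j. j < i \<and> x j = x i} \<in> {j. j < i \<and> x j = x i}"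
    using True by (intro Max_in) auto
  then show ?thesis using True by (simp add: prv_def)
qed

lemma prv_ge: "j < i \<Longrightarrow> x j = x i \<Longrightarrow> j \<le> prv x i"
  unfolding prv_def by (auto intro: Max_ge)

lemma prv_pos_ex: "prv x i > 0 \<Longrightarrow> \<exists>j<i. x j = x i"
  unfolding prv_def by (auto split: if_splits)

lemma prv_val: "\<exists>j<i. x j = x i \<Longrightarrow> x (prv x i) = x i"
proof -
  assume True: "\<exists>j<i. x j = x i"
  have "Max {j. j < i \<and> x j = x i} \<in> {j. j < i \<and> x j = x i}"
    using True by (intro Max_in) auto
  then show ?thesis using True by (simp add: prv_def)
qed

lemma prv_local:
  assumes "\<forall>j\<le>i. y j = x j"
  shows "prv y i = prv x i"
proof -
  have 1: "{j. j < i \<and> y j = y i} = {j. j < i \<and> x j = x i}" using assms by auto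
  have 2: "(\<exists>j<i. y j = y i) = (\<exists>j<i. x j = x i)" using assms by auto
  show ?thesis unfolding prv_def by (simp only: 1 2)
qed

lemma wnd_local:
  assumes "\<forall>j\<le>i. y j = x j"
  shows "wnd y i = wnd x i"
proof -
  have "prv y i = prv x i" using prv_local[OF assms] .
  then show ?thesis unfolding wnd_def using assms by (auto simp: image_def)
qed

lemma wnd_ne: "x i \<in> wnd x i"
  unfolding wnd_def using prv_le[of x i] by auto

lemma wnd_sub: "x \<in> words A \<Longrightarrow> wnd x i \<subseteq> A"
  unfolding wnd_def words_def by auto

lemma wcont_window:
  assumes "\<And>B. B \<noteq> {} \<Longrightarrow> B \<subseteq> A \<Longrightarrow> R B \<in> C"
  shows "wcont A C (\<lambda>x i. R (wnd x i))"
  unfolding wcont_def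
proof (intro conjI ballI allI)
  fix x assume x: "x \<in> words A"
  show "(\<lambda>i. R (wnd x i)) \<in> words C"
    unfolding words_def
  proof (intro CollectI allI)
    fix i
    have "wnd x i \<noteq> {}" using wnd_ne by auto
    then show "R (wnd x i) \<in> C" using assms wnd_sub[OF x] by blast
  qed
next
  fix x :: "nat \<Rightarrow> 'a" and n
  have "\<forall>y\<in>words A. (\<forall>i<n. y i = x i) \<longrightarrow> (\<forall>i<n. R (wnd y i) = R (wnd x i))"
  proof (intro ballI impI allI)
    fix y i assume "\<forall>i<n. y i = x i" "i < n"
    then have "\<forall>j\<le>i. y j = x j" by auto
    then show "R (wnd y i) = R (wnd x i)" using wnd_local by metis
  qed
  then show "\<exists>m. \<forall>y\<in>words A. (\<forall>i<m. y i = x i) \<longrightarrow> (\<forall>i<n. R (wnd y i) = R (wnd x i))"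
    by blast
qed



lemma window_main:
  fixes x :: "nat \<Rightarrow> 'a" and R :: "'a set \<Rightarrow> nat"
  assumes A: "finite A" and x: "x \<in> words A"
    and mono: "\<And>B B'. B \<noteq> {} \<Longrightarrow> B \<subseteq> B' \<Longrightarrow> B' \<subseteq> A \<Longrightarrow> R B \<le> R B'"
    and rng: "\<And>B. B \<noteq> {} \<Longrightarrow> B \<subseteq> A \<Longrightarrow> R B \<in> C" and C: "finite C"
  shows "Max {c\<in>C. infinite {i. R (wnd x i) = c}} = R {a\<in>A. infinite {i. x i = a}}"
proof -
  define S where "S = {a\<in>A. infinite {i. x i = a}}"
  have Sne: "S \<noteq> {}" using ex_inf_letter[OF A x] by (auto simp: S_def)
  have SA: "S \<subseteq> A" by (auto simp: S_def)
  have fS: "finite S" using A SA finite_subset by blast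
  have "finite (\<Union>a\<in>A-S. {i. x i = a})" using A by (auto simp: S_def)
  then obtain T0 where T0: "(\<Union>a\<in>A-S. {i. x i = a}) \<subseteq> {..<T0}" using finite_nat_iff_bounded by blast
  have T0': "\<forall>i\<ge>T0. x i \<in> S"
  proof (intro allI impI)
    fix i assume "i \<ge> T0"
    moreover have "x i \<in> A" using x by (auto simp: words_def)
    ultimately show "x i \<in> S" using T0 by force
  qed
  have occ: "\<forall>a\<in>S. \<exists>t. T \<le> t \<and> x t = a" for T
    by (auto simp: S_def infinite_nat_iff_unbounded_le)
  obtain N where N: "\<forall>a\<in>S. \<exists>t<N. T0 \<le> t \<and> x t = a"
    using finite_choice_bound[OF fS occ[of T0]] by blast
  define T1 where "T1 = max T0 N"
  have wS: "wnd x i \<subseteq> S" if "i \<ge> T1" for i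
  proof -
    have "x i \<in> S" using T0' that by (auto simp: T1_def)
    then obtain t where t: "t < N" "T0 \<le> t" "x t = x i" using N by blast
    have "t < i" using t that by (auto simp: T1_def)
    then have "t \<le> prv x i" using prv_ge t by metis
    then show ?thesis unfolding wnd_def using T0' t by auto
  qed
  have weq: "\<exists>i\<ge>T. wnd x i = S" for T
  proof -
    define T' where "T' = max T T1"
    obtain M where M: "\<forall>a\<in>S. \<exists>t<M. Suc T' \<le> t \<and> x t = a"
      using finite_choice_bound[OF fS occ[of "Suc T'"]] by blast
    define Q where "Q i = (S \<subseteq> x ` {Suc T'..i})" for i
    have QM: "Q M" unfolding Q_def using M by force
    define i where "i = (LEAST i. Q i)"
    have Qi: "Q i" unfolding i_def using QM by (rule LeastI)
    have iT: "i \<ge> Suc T'"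
    proof (rule ccontr)
      assume "\<not> i \<ge> Suc T'"
      then have "{Suc T'..i} = {}" by auto
      then show False using Qi Sne by (auto simp: Q_def)
    qed
    have pv: "prv x i \<le> T'"
    proof (rule ccontr)
      assume c: "\<not> prv x i \<le> T'"
      then have ex: "\<exists>j<i. x j = x i" using prv_pos_ex by (metis gr0I le0)
      have lt: "prv x i < i" using prv_lt[OF ex] .
      have xv: "x (prv x i) = x i" using prv_val[OF ex] .
      have "x ` {Suc T'..i} \<subseteq> x ` {Suc T'..i - 1}"
      proof
        fix z assume "z \<in> x ` {Suc T'..i}"
        then obtain j where j: "j \<in> {Suc T'..i}" "z = x j" by auto
        show "z \<in> x ` {Suc T'..i - 1}"
        proof (cases "j = i")
          case True
          then have "z = x (prv x i)" using j xv by simp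
          moreover have "prv x i \<in> {Suc T'..i - 1}" using c lt by auto
          ultimately show ?thesis by auto
        next
          case False then show ?thesis using j by auto
        qed
      qed
      then have "Q (i - 1)" using Qi by (auto simp: Q_def)
      then have "i \<le> i - 1" unfolding i_def by (rule Least_le)
      then show False using iT by auto
    qed
    have "S \<subseteq> wnd x i" using Qi pv unfolding Q_def wnd_def by auto
    moreover have "wnd x i \<subseteq> S" using wS iT by (auto simp: T'_def)
    ultimately show ?thesis using iT by (intro exI[of _ i]) (auto simp: T'_def)
  qed
  have "Max {c\<in>C. infinite {i. R (wnd x i) = c}} = R S"
  proof (rule max_infset[OF C])
    show "(\<lambda>i. R (wnd x i)) \<in> words C"
      unfolding words_def
    proof (intro CollectI allI)
      fix i
      have "wnd x i \<noteq> {}" using wnd_ne by auto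
      then show "R (wnd x i) \<in> C" using rng wnd_sub[OF x] by blast
    qed
    show "\<forall>T. \<exists>i\<ge>T. R (wnd x i) = R S"
    proof
      fix T obtain i where "i \<ge> T" "wnd x i = S" using weq by blast
      then show "\<exists>i\<ge>T. R (wnd x i) = R S" by auto
    qed
    have "\<forall>i\<ge>T1. R (wnd x i) \<le> R S"
    proof (intro allI impI)
      fix i assume "i \<ge> T1"
      then have "wnd x i \<subseteq> S" by (rule wS)
      moreover have "wnd x i \<noteq> {}" using wnd_ne by auto
      ultimately show "R (wnd x i) \<le> R S" using mono SA by blast
    qed
    then show "\<exists>T. \<forall>i\<ge>T. R (wnd x i) \<le> R S" by blast
  qed
  then show ?thesis by (simp add: S_def)
qed



definition le2 :: "nat \<times> nat \<Rightarrow> nat \<times> nat \<Rightarrow> bool" where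
  "le2 p q \<longleftrightarrow> fst p \<le> fst q \<and> snd p \<le> snd q"

definition cw :: "nat \<Rightarrow> nat \<Rightarrow> nat \<Rightarrow> nat \<Rightarrow> (nat \<Rightarrow> nat \<times> nat) \<Rightarrow> nat \<Rightarrow> nat \<Rightarrow> bool" where
  "cw i1 k1 i2 k2 c m n \<longleftrightarrow> m \<in> {0,1} \<and> m \<le> n \<and>
        (\<forall>j\<in>{m..n}. c j \<in> {i1..k1} \<times> {i2..k2} \<and> (even_pair (c j) \<longleftrightarrow> even j)) \<and>
        (\<forall>j\<in>{m..<n}. pair_less (c j) (c (Suc j)))"

lemma alt_chain_cw: "alt_chain i1 k1 i2 k2 m n \<longleftrightarrow> (\<exists>c. cw i1 k1 i2 k2 c m n)"
  unfolding alt_chain_def cw_def by auto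

lemma pair_less_le_trans: "pair_less a b \<Longrightarrow> le2 b c \<Longrightarrow> pair_less a c"
  unfolding pair_less_def le2_def by (cases a, cases b, cases c) auto

context
  fixes i1 k1 i2 k2 :: nat
  assumes ik1: "i1 \<le> k1" and ik2: "i2 \<le> k2"
begin

abbreviation "PP \<equiv> {i1..k1} \<times> {i2..k2}"
abbreviation "ac \<equiv> alt_chain i1 k1 i2 k2"
abbreviation "cc \<equiv> cw i1 k1 i2 k2"

lemma cw_bound:
  assumes "cc c m n"
  shows "n - m \<le> (k1 - i1) + (k2 - i2)"
proof -
  have cw: "m \<le> n" "\<forall>j\<in>{m..n}. c j \<in> PP" "\<forall>j\<in>{m..<n}. pair_less (c j) (c (Suc j))"
    using assms unfolding cw_def by auto
  have key: "fst (c m) + snd (c m) + (j - m) \<le> fst (c j) + snd (c j)" if "m \<le> j" "j \<le> n" for j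
    using that(1,2)
  proof (induction j rule: dec_induct)
    case base then show ?case by simp
  next
    case (step k)
    then have "pair_less (c k) (c (Suc k))" using cw by auto
    then have "fst (c k) + snd (c k) < fst (c (Suc k)) + snd (c (Suc k))"
      unfolding pair_less_def by (cases "c k", cases "c (Suc k)") auto
    then show ?case using step by auto
  qed
  have "fst (c m) + snd (c m) + (n - m) \<le> fst (c n) + snd (c n)" using key cw by auto
  moreover have "c m \<in> PP" "c n \<in> PP" using cw by auto
  ultimately show ?thesis by (cases "c m", cases "c n") auto
qed

lemma cw_single: "p \<in> PP \<Longrightarrow> cc (\<lambda>_. p) (if even_pair p then 0 else 1) (if even_pair p then 0 else 1)"
  unfolding cw_def by auto

definition Lset where "Lset = {n - m | m n. ac m n}"

lemma Lset_fin: "finite Lset"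
proof -
  have "Lset \<subseteq> {..(k1 - i1) + (k2 - i2)}"
    unfolding Lset_def using cw_bound alt_chain_cw by fastforce
  then show ?thesis using finite_subset by blast
qed

lemma Lset_ne: "Lset \<noteq> {}"
proof -
  have "(i1, i2) \<in> PP" using ik1 ik2 by auto
  then have "ac (if even_pair (i1,i2) then 0 else 1) (if even_pair (i1,i2) then 0 else 1)"
    using cw_single alt_chain_cw by blast
  then show ?thesis unfolding Lset_def by blast
qed

lemma ac_le_max: "ac m n \<Longrightarrow> n - m \<le> Max Lset"
  using Lset_fin unfolding Lset_def by (intro Max_ge) auto

lemma top_parity:
  assumes c: "cc c m n" and mx: "\<forall>m' n'. ac m' n' \<longrightarrow> n' - m' \<le> n - m"
  shows "even_pair (k1, k2) \<longleftrightarrow> even n"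
proof (rule ccontr)
  assume np: "\<not> (even_pair (k1, k2) \<longleftrightarrow> even n)"
  have cn: "c n \<in> PP" "even_pair (c n) \<longleftrightarrow> even n" "m \<le> n" "m \<in> {0,1}"
    using c unfolding cw_def by auto
  have ne: "c n \<noteq> (k1, k2)" using np cn by auto
  have pl: "pair_less (c n) (k1, k2)" using cn ne unfolding pair_less_def by auto
  define c' where "c' = c(Suc n := (k1, k2))"
  have A1: "\<forall>j\<in>{m..Suc n}. c' j \<in> PP \<and> (even_pair (c' j) \<longleftrightarrow> even j)"
  proof
    fix j assume j: "j \<in> {m..Suc n}"
    show "c' j \<in> PP \<and> (even_pair (c' j) \<longleftrightarrow> even j)"
    proof (cases "j = Suc n")
      case True then show ?thesis using np ik1 ik2 by (auto simp: c'_def)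
    next
      case False then show ?thesis using j c unfolding cw_def c'_def by auto
    qed
  qed
  have A2: "\<forall>j\<in>{m..<Suc n}. pair_less (c' j) (c' (Suc j))"
  proof
    fix j assume j: "j \<in> {m..<Suc n}"
    show "pair_less (c' j) (c' (Suc j))"
    proof (cases "j = n")
      case True then show ?thesis using pl by (auto simp: c'_def)
    next
      case False then show ?thesis using j c unfolding cw_def c'_def by auto
    qed
  qed
  have "cc c' m (Suc n)" unfolding cw_def using A1 A2 cn by auto
  then have "Suc n - m \<le> n - m" using mx alt_chain_cw by blast
  then show False using cn by auto
qed

lemma best_chain:
  "\<exists>c m n. cc c m n \<and> n - m = Max Lset"
proof -
  have "Max Lset \<in> Lset" using Lset_fin Lset_ne by (rule Max_in)
  then obtain m n where mn: "Max Lset = n - m" "ac m n" unfolding Lset_def by blast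
  then obtain c where "cc c m n" using alt_chain_cw by blast
  then show ?thesis using mn by metis
qed

lemma meet_char:
  assumes c: "cc c m n" and len: "n - m = Max Lset"
  shows "chain_meet (i1, k1) (i2, k2) = (m, n)"
  unfolding chain_meet_def fst_conv snd_conv
proof (rule the_equality)
  have mx: "\<forall>m' n'. ac m' n' \<longrightarrow> n' - m' \<le> n - m" using ac_le_max len by auto
  show "ac (fst (m, n)) (snd (m, n)) \<and> (\<forall>m' n'. ac m' n' \<longrightarrow> n' - m' \<le> snd (m, n) - fst (m, n))"
    using c mx alt_chain_cw by auto
  fix t assume t: "ac (fst t) (snd t) \<and> (\<forall>m' n'. ac m' n' \<longrightarrow> n' - m' \<le> snd t - fst t)"
  obtain c2 where c2: "cc c2 (fst t) (snd t)" using t alt_chain_cw by blast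
  have l1: "snd t - fst t \<le> n - m" using mx t by auto
  have l2: "n - m \<le> snd t - fst t" using t c alt_chain_cw by blast
  have mx2: "\<forall>m' n'. ac m' n' \<longrightarrow> n' - m' \<le> snd t - fst t" using t by auto
  have p1: "even_pair (k1, k2) \<longleftrightarrow> even n" using top_parity[OF c mx] .
  have p2: "even_pair (k1, k2) \<longleftrightarrow> even (snd t)" using top_parity[OF c2 mx2] .
  have r: "m \<in> {0,1}" "m \<le> n" "fst t \<in> {0,1}" "fst t \<le> snd t" using c c2 unfolding cw_def by auto
  have "fst t = m \<and> snd t = n" using l1 l2 p1 p2 r by (auto; presburger)
  then show "t = (m, n)" by (cases t) auto
qed


definition EE where "EE p = {n. \<exists>c m. cc c m n \<and> c n = p}"
definition hh where "hh p = Max (EE p)"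

lemma EE_fin: "finite (EE p)"
proof -
  have "EE p \<subseteq> {..1 + ((k1 - i1) + (k2 - i2))}"
  proof
    fix n assume "n \<in> EE p"
    then obtain c m where c: "cc c m n" unfolding EE_def by blast
    have "n - m \<le> (k1 - i1) + (k2 - i2)" using cw_bound[OF c] .
    moreover have "m \<le> 1" using c unfolding cw_def by auto
    ultimately show "n \<in> {..1 + ((k1 - i1) + (k2 - i2))}" by auto
  qed
  then show ?thesis using finite_subset by blast
qed

lemma EE_ne: "p \<in> PP \<Longrightarrow> (if even_pair p then 0 else 1) \<in> EE p"
  unfolding EE_def using cw_single by blast

lemma EE_par: "n \<in> EE p \<Longrightarrow> (even n \<longleftrightarrow> even_pair p)"
  unfolding EE_def cw_def by auto

lemma hh_in: assumes "p \<in> PP" shows "hh p \<in> EE p"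
proof -
  have "EE p \<noteq> {}" using EE_ne[OF assms] by blast
  then show ?thesis unfolding hh_def by (rule Max_in[OF EE_fin])
qed

lemma hh_ge: "n \<in> EE p \<Longrightarrow> n \<le> hh p"
  unfolding hh_def using EE_fin by (intro Max_ge) auto

lemma hh_par: "p \<in> PP \<Longrightarrow> even (hh p) \<longleftrightarrow> even_pair p"
  using hh_in EE_par by blast

lemma EE_mono:
  assumes p: "p \<in> PP" and q: "q \<in> PP" and pq: "le2 p q" and n: "n \<in> EE p"
  shows "\<exists>n'\<in>EE q. n \<le> n'"
proof -
  obtain c m where c: "cc c m n" "c n = p" using n unfolding EE_def by blast
  have cn: "m \<le> n" "m \<in> {0,1}" "even_pair p \<longleftrightarrow> even n"
    using c unfolding cw_def by auto
  show ?thesis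
  proof (cases "p = q")
    case True then show ?thesis using n by auto
  next
    case pne: False
    show ?thesis
    proof (cases "even_pair p \<longleftrightarrow> even_pair q")
      case True
      define c' where "c' = c(n := q)"
      have A1: "\<forall>j\<in>{m..n}. c' j \<in> PP \<and> (even_pair (c' j) \<longleftrightarrow> even j)"
        using c q True cn unfolding cw_def c'_def by auto
      have A2: "\<forall>j\<in>{m..<n}. pair_less (c' j) (c' (Suc j))"
      proof
        fix j assume j: "j \<in> {m..<n}"
        show "pair_less (c' j) (c' (Suc j))"
        proof (cases "Suc j = n")
          case True
          have "pair_less (c j) p" using c j True unfolding cw_def by force
          then have "pair_less (c j) q" using pq pair_less_le_trans by blast
          then show ?thesis using True j by (auto simp: c'_def)
        next
          case False then show ?thesis using j c unfolding cw_def c'_def by auto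
        qed
      qed
      have "cc c' m n" unfolding cw_def using A1 A2 cn by auto
      then have "n \<in> EE q" unfolding EE_def c'_def by auto
      then show ?thesis by auto
    next
      case False
      define c' where "c' = c(Suc n := q)"
      have pl: "pair_less p q" using pq pne unfolding pair_less_def le2_def by auto
      have A1: "\<forall>j\<in>{m..Suc n}. c' j \<in> PP \<and> (even_pair (c' j) \<longleftrightarrow> even j)"
        using c q False cn unfolding cw_def c'_def by auto
      have A2: "\<forall>j\<in>{m..<Suc n}. pair_less (c' j) (c' (Suc j))"
      proof
        fix j assume j: "j \<in> {m..<Suc n}"
        show "pair_less (c' j) (c' (Suc j))"
        proof (cases "j = n")
          case True then show ?thesis using pl c by (auto simp: c'_def)
        next
          case False then show ?thesis using j c unfolding cw_def c'_def by auto
        qed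
      qed
      have "cc c' m (Suc n)" unfolding cw_def using A1 A2 cn by auto
      then have "Suc n \<in> EE q" unfolding EE_def c'_def by auto
      then show ?thesis by (intro bexI[of _ "Suc n"]) auto
    qed
  qed
qed

lemma hh_mono: "p \<in> PP \<Longrightarrow> q \<in> PP \<Longrightarrow> le2 p q \<Longrightarrow> hh p \<le> hh q"
  using EE_mono hh_in hh_ge le_trans by meson

lemma hh_upper:
  assumes cs: "cc cs ms ns" and len: "ns - ms = Max Lset" and p: "p \<in> PP"
  shows "hh p \<le> ns"
proof -
  have "n \<le> ns" if n: "n \<in> EE p" for n
  proof (rule ccontr)
    assume gt: "\<not> n \<le> ns"
    obtain c m where c: "cc c m n" "c n = p" using n unfolding EE_def by blast
    have l: "n - m \<le> ns - ms" using ac_le_max c len alt_chain_cw by metis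
    have r: "m \<in> {0,1}" "m \<le> n" "ms \<in> {0,1}" "ms \<le> ns" using c cs unfolding cw_def by auto
    have eqs: "n - m = ns - ms" "n = Suc ns" using l r gt by auto
    have mx1: "\<forall>m' n'. ac m' n' \<longrightarrow> n' - m' \<le> ns - ms" using ac_le_max len by auto
    have mx2: "\<forall>m' n'. ac m' n' \<longrightarrow> n' - m' \<le> n - m" using mx1 eqs by auto
    have "even_pair (k1, k2) \<longleftrightarrow> even ns" using top_parity[OF cs mx1] .
    moreover have "even_pair (k1, k2) \<longleftrightarrow> even n" using top_parity[OF c(1) mx2] .
    ultimately show False using eqs by auto
  qed
  then show ?thesis using hh_in[OF p] by auto
qed

lemma hh_lower:
  assumes cs: "cc cs ms ns" and len: "ns - ms = Max Lset" and p: "p \<in> PP"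
  shows "ms \<le> hh p"
proof (cases "ms = 0")
  case True then show ?thesis by simp
next
  case False
  then have ms1: "ms = 1" using cs unfolding cw_def by auto
  show ?thesis
  proof (cases "even_pair p")
    case False
    then have "odd (hh p)" using hh_par p by auto
    then show ?thesis using ms1 by (cases "hh p") auto
  next
    case True
    define b where "b = (i1, i2)"
    have bP: "b \<in> PP" using ik1 ik2 by (auto simp: b_def)
    have c1: "cs 1 \<in> PP" "\<not> even_pair (cs 1)" "1 \<le> ns" using cs ms1 unfolding cw_def by auto
    have bodd: "\<not> even_pair b"
    proof
      assume eb: "even_pair b"
      have "b \<noteq> cs 1" using eb c1 by auto
      moreover have "le2 b (cs 1)" using c1 by (auto simp: b_def le2_def)
      ultimately have pl: "pair_less b (cs 1)" unfolding pair_less_def le2_def by auto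
      define c' where "c' = cs(0 := b)"
      have A1: "\<forall>j\<in>{0..ns}. c' j \<in> PP \<and> (even_pair (c' j) \<longleftrightarrow> even j)"
      proof
        fix j assume j: "j \<in> {0..ns}"
        show "c' j \<in> PP \<and> (even_pair (c' j) \<longleftrightarrow> even j)"
        proof (cases "j = 0")
          case True then show ?thesis using bP eb by (auto simp: c'_def)
        next
          case False then show ?thesis using j cs ms1 unfolding cw_def c'_def by auto
        qed
      qed
      have A2: "\<forall>j\<in>{0..<ns}. pair_less (c' j) (c' (Suc j))"
      proof
        fix j assume j: "j \<in> {0..<ns}"
        show "pair_less (c' j) (c' (Suc j))"
        proof (cases "j = 0")
          case True then show ?thesis using pl by (auto simp: c'_def)
        next
          case False then show ?thesis using j cs ms1 unfolding cw_def c'_def by auto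
        qed
      qed
      have "cc c' 0 ns" unfolding cw_def using A1 A2 by auto
      then have "ns - 0 \<le> Max Lset" using ac_le_max alt_chain_cw by blast
      then show False using len ms1 c1 by auto
    qed
    define d where "d = (\<lambda>j::nat. if j \<le> 1 then b else p)"
    have "b \<noteq> p" using bodd True by auto
    moreover have "le2 b p" using p by (auto simp: b_def le2_def)
    ultimately have pl: "pair_less b p" unfolding pair_less_def le2_def by auto
    have A1: "\<forall>j\<in>{1..2}. d j \<in> PP \<and> (even_pair (d j) \<longleftrightarrow> even j)"
    proof
      fix j :: nat assume "j \<in> {1..2}"
      then have "j = 1 \<or> j = 2" by auto
      then show "d j \<in> PP \<and> (even_pair (d j) \<longleftrightarrow> even j)"
        using bP p bodd True by (auto simp: d_def)
    qed
    have A2: "\<forall>j\<in>{1..<2}. pair_less (d j) (d (Suc j))"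
      using pl by (auto simp: d_def)
    have "cc d 1 2" unfolding cw_def using A1 A2 by auto
    then have "2 \<in> EE p" unfolding EE_def d_def by auto
    then show ?thesis using hh_ge ms1 by fastforce
  qed
qed

lemma rank_exists:
  "\<exists>h. \<forall>p\<in>PP. h p \<in> {fst (chain_meet (i1, k1) (i2, k2))..snd (chain_meet (i1, k1) (i2, k2))}
        \<and> (even (h p) \<longleftrightarrow> even_pair p) \<and> (\<forall>q\<in>PP. le2 p q \<longrightarrow> h p \<le> h q)"
proof -
  obtain cs ms ns where cs: "cc cs ms ns" "ns - ms = Max Lset" using best_chain by blast
  have "chain_meet (i1, k1) (i2, k2) = (ms, ns)" using meet_char[OF cs] .
  then show ?thesis
    using hh_upper[OF cs] hh_lower[OF cs] hh_par hh_mono by (intro exI[of _ hh]) auto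
qed

lemma chain_exists:
  "\<exists>c. \<forall>a\<in>{fst (chain_meet (i1, k1) (i2, k2))..snd (chain_meet (i1, k1) (i2, k2))}.
        c a \<in> PP \<and> (even_pair (c a) \<longleftrightarrow> even a) \<and>
        (\<forall>b\<in>{fst (chain_meet (i1, k1) (i2, k2))..snd (chain_meet (i1, k1) (i2, k2))}. a \<le> b \<longrightarrow> le2 (c a) (c b))"
proof -
  obtain cs ms ns where cs: "cc cs ms ns" "ns - ms = Max Lset" using best_chain by blast
  have mt: "chain_meet (i1, k1) (i2, k2) = (ms, ns)" using meet_char[OF cs] .
  have cw': "\<forall>j\<in>{ms..ns}. cs j \<in> PP \<and> (even_pair (cs j) \<longleftrightarrow> even j)"
    "\<forall>j\<in>{ms..<ns}. pair_less (cs j) (cs (Suc j))" using cs unfolding cw_def by auto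
  have mono: "le2 (cs a) (cs b)" if "ms \<le> a" "a \<le> b" "b \<le> ns" for a b
    using that(2,3)
  proof (induction b rule: dec_induct)
    case base then show ?case by (simp add: le2_def)
  next
    case (step k)
    then have "pair_less (cs k) (cs (Suc k))" using cw' that(1) by auto
    then show ?case using step unfolding le2_def pair_less_def by auto
  qed
  show ?thesis unfolding mt fst_conv snd_conv
    using cw' mono by (intro exI[of _ cs]) auto
qed

end



lemma wcont_letter:
  assumes "\<And>a. a \<in> A \<Longrightarrow> g a \<in> B"
  shows "wcont A B (\<lambda>x i. g (x i))"
  unfolding wcont_def
proof (intro conjI ballI allI)
  fix x assume "x \<in> words A" then show "(\<lambda>i. g (x i)) \<in> words B"
    using assms unfolding words_def by auto
next
  fix x :: "nat \<Rightarrow> 'a" and n :: nat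
  show "\<exists>m. \<forall>y\<in>words A. (\<forall>i<m. y i = x i) \<longrightarrow> (\<forall>i<n. g (y i) = g (x i))"
    by (rule exI[of _ n]) auto
qed

lemma parity_lang_iff:
  "y \<in> parity_lang lo hi \<longleftrightarrow> y \<in> words {lo..hi} \<and> even (Max {a \<in> {lo..hi}. infinite {i. y i = a}})"
  unfolding parity_lang_def by auto

lemma part1_le:
  fixes i1 k1 i2 k2 :: nat
  assumes ik1: "i1 \<le> k1" and ik2: "i2 \<le> k2"
  defines "m \<equiv> fst (chain_meet (i1, k1) (i2, k2))" and "n \<equiv> snd (chain_meet (i1, k1) (i2, k2))"
  shows "wadge_le ({i1..k1} \<times> {i2..k2}) (lang_prod (parity_lang i1 k1) (parity_lang i2 k2))
            {m..n} (parity_lang m n)"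
proof -
  let ?P = "{i1..k1} \<times> {i2..k2}"
  obtain h where h: "\<forall>p\<in>?P. h p \<in> {m..n} \<and> (even (h p) \<longleftrightarrow> even_pair p) \<and> (\<forall>q\<in>?P. le2 p q \<longrightarrow> h p \<le> h q)"
    using rank_exists[OF ik1 ik2] unfolding m_def n_def by blast
  define R where "R B = h (Max (fst ` B), Max (snd ` B))" for B :: "(nat \<times> nat) set"
  have fP: "finite ?P" by auto
  have inP: "(Max (fst ` B), Max (snd ` B)) \<in> ?P" if "B \<noteq> {}" "B \<subseteq> ?P" for B
  proof -
    have fB: "finite B" using that fP finite_subset by blast
    have "Max (fst ` B) \<in> fst ` B" "Max (snd ` B) \<in> snd ` B" using fB that by auto
    then show ?thesis using that by auto
  qed
  have rng: "R B \<in> {m..n}" if "B \<noteq> {}" "B \<subseteq> ?P" for B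
    using h inP[OF that] unfolding R_def by blast
  have mono: "R B \<le> R B'" if "B \<noteq> {}" "B \<subseteq> B'" "B' \<subseteq> ?P" for B B'
  proof -
    have fB': "finite B'" using that fP finite_subset by blast
    have ne': "B' \<noteq> {}" using that by auto
    have "Max (fst ` B) \<le> Max (fst ` B')" "Max (snd ` B) \<le> Max (snd ` B')"
      using that fB' by (auto intro!: Max_mono)
    then have "le2 (Max (fst ` B), Max (snd ` B)) (Max (fst ` B'), Max (snd ` B'))"
      unfolding le2_def by auto
    moreover have "(Max (fst ` B), Max (snd ` B)) \<in> ?P" using inP that by blast
    moreover have "(Max (fst ` B'), Max (snd ` B')) \<in> ?P" using inP ne' that by blast
    ultimately show ?thesis using h unfolding R_def by blast
  qed
  show ?thesis unfolding wadge_le_def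
  proof (intro exI conjI ballI)
    show "wcont ?P {m..n} (\<lambda>x i. R (wnd x i))" using wcont_window rng by blast
  next
    fix x assume x: "x \<in> words ?P"
    define S where "S = {a\<in>?P. infinite {i. x i = a}}"
    have Sne: "S \<noteq> {}" using ex_inf_letter[OF fP x] unfolding S_def by blast
    have SP: "S \<subseteq> ?P" by (auto simp: S_def)
    have fy: "(\<lambda>i. R (wnd x i)) \<in> words {m..n}"
      using wcont_window[of ?P R "{m..n}"] rng x unfolding wcont_def by blast
    have M: "Max {c\<in>{m..n}. infinite {i. R (wnd x i) = c}} = R S"
      unfolding S_def using window_main[OF fP x mono rng] by auto
    have e1: "{c\<in>{i1..k1}. infinite {i. fst (x i) = c}} = fst ` S"
      unfolding S_def by (rule infset_image[OF fP x]) auto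
    have e2: "{c\<in>{i2..k2}. infinite {i. snd (x i) = c}} = snd ` S"
      unfolding S_def by (rule infset_image[OF fP x]) auto
    have w1: "(\<lambda>i. fst (x i)) \<in> words {i1..k1}" "(\<lambda>i. snd (x i)) \<in> words {i2..k2}"
      using x unfolding words_def by (auto simp: mem_Times_iff)
    have "x \<in> lang_prod (parity_lang i1 k1) (parity_lang i2 k2) \<longleftrightarrow>
          even (Max (fst ` S)) \<and> even (Max (snd ` S))"
      unfolding lang_prod_def parity_lang_iff using e1 e2 w1 by auto
    also have "\<dots> \<longleftrightarrow> even (R S)"
      using h inP[OF Sne SP] unfolding R_def even_pair_def by auto
    also have "\<dots> \<longleftrightarrow> (\<lambda>i. R (wnd x i)) \<in> parity_lang m n"
      unfolding parity_lang_iff using fy M by auto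
    finally show "x \<in> lang_prod (parity_lang i1 k1) (parity_lang i2 k2) \<longleftrightarrow>
          (\<lambda>i. R (wnd x i)) \<in> parity_lang m n" .
  qed
qed

lemma part1_ge:
  fixes i1 k1 i2 k2 :: nat
  assumes ik1: "i1 \<le> k1" and ik2: "i2 \<le> k2"
  defines "m \<equiv> fst (chain_meet (i1, k1) (i2, k2))" and "n \<equiv> snd (chain_meet (i1, k1) (i2, k2))"
  shows "wadge_le {m..n} (parity_lang m n) ({i1..k1} \<times> {i2..k2}) (lang_prod (parity_lang i1 k1) (parity_lang i2 k2))"
proof -
  let ?P = "{i1..k1} \<times> {i2..k2}"
  obtain c where c: "\<forall>a\<in>{m..n}. c a \<in> ?P \<and> (even_pair (c a) \<longleftrightarrow> even a) \<and> (\<forall>b\<in>{m..n}. a \<le> b \<longrightarrow> le2 (c a) (c b))"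
    using chain_exists[OF ik1 ik2] unfolding m_def n_def by blast
  show ?thesis unfolding wadge_le_def
  proof (intro exI conjI ballI)
    have cP: "c a \<in> ?P" if "a \<in> {m..n}" for a using c that by blast
    show "wcont {m..n} ?P (\<lambda>x i. c (x i))" by (rule wcont_letter) (rule cP)
  next
    fix z assume z: "z \<in> words {m..n}"
    define S where "S = {a\<in>{m..n}. infinite {i. z i = a}}"
    have fC: "finite {m..n}" by auto
    have Sne: "S \<noteq> {}" using ex_inf_letter[OF fC z] unfolding S_def by blast
    have SC: "S \<subseteq> {m..n}" by (auto simp: S_def)
    have fS: "finite S" using SC finite_subset by auto
    have MS: "Max S \<in> {m..n}" using Max_in[OF fS Sne] SC by auto
    have cP: "c a \<in> ?P" if "a \<in> {m..n}" for a using c that by blast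
    have cm: "le2 (c a) (c b)" if "a \<in> S" "b \<in> S" "a \<le> b" for a b
      using c that SC by blast
    have im1: "(\<lambda>a. fst (c a)) ` {m..n} \<subseteq> {i1..k1}" using cP by (force simp: mem_Times_iff)
    have im2: "(\<lambda>a. snd (c a)) ` {m..n} \<subseteq> {i2..k2}" using cP by (force simp: mem_Times_iff)
    have e1: "{a\<in>{i1..k1}. infinite {i. fst (c (z i)) = a}} = (\<lambda>a. fst (c a)) ` S"
      unfolding S_def by (rule infset_image[OF fC z im1])
    have e2: "{a\<in>{i2..k2}. infinite {i. snd (c (z i)) = a}} = (\<lambda>a. snd (c a)) ` S"
      unfolding S_def by (rule infset_image[OF fC z im2])
    have m1: "Max ((\<lambda>a. fst (c a)) ` S) = fst (c (Max S))"
      by (rule max_image_mono[OF fS Sne]) (use cm in \<open>simp add: le2_def\<close>)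
    have m2: "Max ((\<lambda>a. snd (c a)) ` S) = snd (c (Max S))"
      by (rule max_image_mono[OF fS Sne]) (use cm in \<open>simp add: le2_def\<close>)
    have w1: "(\<lambda>i. fst (c (z i))) \<in> words {i1..k1}" "(\<lambda>i. snd (c (z i))) \<in> words {i2..k2}"
      using z im1 im2 unfolding words_def image_subset_iff by auto
    have "(\<lambda>i. c (z i)) \<in> lang_prod (parity_lang i1 k1) (parity_lang i2 k2) \<longleftrightarrow> even_pair (c (Max S))"
      unfolding lang_prod_def parity_lang_iff even_pair_def mem_Collect_eq using e1 e2 w1 m1 m2 by simp
    also have "\<dots> \<longleftrightarrow> even (Max S)" using c MS by blast
    also have "\<dots> \<longleftrightarrow> z \<in> parity_lang m n" unfolding parity_lang_iff S_def using z by simp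
    finally show "z \<in> parity_lang m n \<longleftrightarrow> (\<lambda>i. c (z i)) \<in> lang_prod (parity_lang i1 k1) (parity_lang i2 k2)"
      by simp
  qed
qed



lemma tuple_fin: "finite (tuple_alph k {0..(2::nat)})"
proof -
  let ?L = "{xs. set xs \<subseteq> {0..(2::nat)} \<and> length xs = k}"
  have "tuple_alph k {0..2} \<subseteq> (\<lambda>xs j. if j < k then xs ! j else 0) ` ?L"
  proof
    fix v assume v: "v \<in> tuple_alph k {0..2}"
    have v': "(\<forall>j<k. v j \<in> {0..2}) \<and> (\<forall>j\<ge>k. v j = 0)"
      using v unfolding tuple_alph_def by (rule CollectD)
    then have v1: "\<forall>j<k. v j \<in> {0..2}" and v2: "\<forall>j\<ge>k. v j = 0" by blast+
    have "v = (\<lambda>j. if j < k then map v [0..<k] ! j else 0)"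
    proof (rule ext)
      fix j show "v j = (if j < k then map v [0..<k] ! j else 0)"
        using v2 by (cases "j < k") simp_all
    qed
    moreover have "map v [0..<k] \<in> ?L"
    proof -
      have "set (map v [0..<k]) \<subseteq> {0..2}" using v1 by auto
      then show ?thesis by simp
    qed
    ultimately show "v \<in> (\<lambda>xs j. if j < k then xs ! j else 0) ` ?L" by (rule image_eqI)
  qed
  moreover have "finite ?L" by (rule finite_lists_length_eq) simp
  ultimately show ?thesis by (meson finite_subset finite_imageI)
qed

definition rk :: "nat \<Rightarrow> (nat \<Rightarrow> nat) \<Rightarrow> nat" where
  "rk k u = 2 * card {j. j < k \<and> u j = 2} + (if \<exists>j<k. u j = 1 then 1 else 0)"

lemma rk_range:
  assumes "\<forall>j<k. u j \<le> 2" shows "rk k u \<le> 2 * k"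
proof (cases "\<exists>j<k. u j = 1")
  case True
  then obtain j0 where j0: "j0 < k" "u j0 = 1" by auto
  have "{j. j < k \<and> u j = 2} \<subseteq> {..<k} - {j0}" using j0 by auto
  then have "card {j. j < k \<and> u j = 2} \<le> card ({..<k} - {j0})" by (intro card_mono) auto
  also have "\<dots> = k - 1" using j0 by auto
  finally show ?thesis using True j0 unfolding rk_def by auto
next
  case False
  have "{j. j < k \<and> u j = 2} \<subseteq> {..<k}" by auto
  then have "card {j. j < k \<and> u j = 2} \<le> k" using card_mono[of "{..<k}"] by fastforce
  then show ?thesis using False unfolding rk_def by auto
qed

lemma rk_mono:
  assumes "\<forall>j<k. u j \<le> u' j \<and> u' j \<le> 2" shows "rk k u \<le> rk k u'"
proof -
  have sub: "{j. j < k \<and> u j = 2} \<subseteq> {j. j < k \<and> u' j = 2}" using assms by force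
  have fin: "finite {j. j < k \<and> u' j = 2}" by auto
  have c1: "card {j. j < k \<and> u j = 2} \<le> card {j. j < k \<and> u' j = 2}"
    using card_mono[OF fin sub] .
  show ?thesis
  proof (cases "(\<exists>j<k. u j = 1) \<and> \<not> (\<exists>j<k. u' j = 1)")
    case True
    then obtain j0 where j0: "j0 < k" "u j0 = 1" "u' j0 \<noteq> 1" by auto
    have "u j0 \<le> u' j0 \<and> u' j0 \<le> 2" using assms j0 by blast
    then have "u' j0 = 2" using j0 by linarith
    then have "j0 \<in> {j. j < k \<and> u' j = 2}" "j0 \<notin> {j. j < k \<and> u j = 2}" using j0 by auto
    then have "{j. j < k \<and> u j = 2} \<subset> {j. j < k \<and> u' j = 2}" using sub by blast
    then have "card {j. j < k \<and> u j = 2} < card {j. j < k \<and> u' j = 2}"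
      using psubset_card_mono[OF fin] by blast
    then show ?thesis unfolding rk_def using True by auto
  next
    case False
    then show ?thesis unfolding rk_def using c1 by auto
  qed
qed

lemma rk_par:
  assumes "\<forall>j<k. u j \<le> 2" shows "even (rk k u) \<longleftrightarrow> (\<forall>j<k. even (u j))"
proof -
  have "(\<exists>j<k. u j = 1) \<longleftrightarrow> \<not> (\<forall>j<k. even (u j))"
  proof
    assume "\<exists>j<k. u j = 1" then show "\<not> (\<forall>j<k. even (u j))" by auto
  next
    assume "\<not> (\<forall>j<k. even (u j))"
    then obtain j where j: "j < k" "odd (u j)" by auto
    have "u j \<le> 2" using assms j by blast
    then have "u j = 0 \<or> u j = 1 \<or> u j = 2" by linarith
    then have "u j = 1" using j by auto
    then show "\<exists>j<k. u j = 1" using j by auto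
  qed
  then show ?thesis unfolding rk_def by auto
qed

lemma part2_le:
  fixes k :: nat
  shows "wadge_le (tuple_alph k {0..2}) (lang_pow k (parity_lang 0 2)) {0..2*k} (parity_lang 0 (2*k))"
proof -
  let ?T = "tuple_alph k {0..(2::nat)}"
  define U where "U B = (\<lambda>j. Max ((\<lambda>v. v j) ` B))" for B :: "(nat \<Rightarrow> nat) set"
  define R where "R B = rk k (U B)" for B
  have fT: "finite ?T" by (rule tuple_fin)
  have Ub: "U B j \<in> (\<lambda>v. v j) ` B" if "B \<noteq> {}" "B \<subseteq> ?T" for B j
  proof -
    have "finite B" using that fT finite_subset by blast
    then show ?thesis unfolding U_def using that by (intro Max_in) auto
  qed
  have U2: "\<forall>j<k. U B j \<le> 2" if BB: "B \<noteq> {}" "B \<subseteq> ?T" for B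
  proof (intro allI impI)
    fix j assume "j < k"
    obtain v where "v \<in> B" "U B j = v j" using Ub[OF BB, of j] by auto
    then show "U B j \<le> 2" using BB \<open>j < k\<close> unfolding tuple_alph_def by auto
  qed
  have rng: "R B \<in> {0..2*k}" if "B \<noteq> {}" "B \<subseteq> ?T" for B
    using rk_range[OF U2[OF that]] unfolding R_def by auto
  have mono: "R B \<le> R B'" if "B \<noteq> {}" "B \<subseteq> B'" "B' \<subseteq> ?T" for B B'
  proof -
    have fB': "finite B'" using that fT finite_subset by blast
    have ne': "B' \<noteq> {}" using that by auto
    have "U B j \<le> U B' j" for j unfolding U_def using that fB' by (auto intro!: Max_mono)
    then show ?thesis unfolding R_def using U2[OF ne' that(3)]
      by (intro rk_mono) (auto)
  qed
  show ?thesis unfolding wadge_le_def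
  proof (intro exI conjI ballI)
    show "wcont ?T {0..2*k} (\<lambda>x i. R (wnd x i))" using wcont_window rng by blast
  next
    fix x assume x: "x \<in> words ?T"
    define S where "S = {a\<in>?T. infinite {i. x i = a}}"
    have Sne: "S \<noteq> {}" using ex_inf_letter[OF fT x] unfolding S_def by blast
    have ST: "S \<subseteq> ?T" by (auto simp: S_def)
    have fy: "(\<lambda>i. R (wnd x i)) \<in> words {0..2*k}"
      using wcont_window[of ?T R "{0..2*k}"] rng x unfolding wcont_def by blast
    have M: "Max {c\<in>{0..2*k}. infinite {i. R (wnd x i) = c}} = R S"
      unfolding S_def using window_main[OF fT x mono rng] by auto
    have e: "{c\<in>{0..2}. infinite {i. x i j = c}} = (\<lambda>v. v j) ` S" if "j < k" for j
      unfolding S_def by (rule infset_image[OF fT x]) (use that in \<open>auto simp: tuple_alph_def\<close>)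
    have w: "(\<lambda>i. x i j) \<in> words {0..2}" if "j < k" for j
      using x that unfolding words_def tuple_alph_def by auto
    have "x \<in> lang_pow k (parity_lang 0 2) \<longleftrightarrow> (\<forall>j<k. even (U S j))"
      unfolding lang_pow_def parity_lang_iff U_def using e w by auto
    also have "\<dots> \<longleftrightarrow> even (R S)"
      using rk_par[OF U2[OF Sne ST]] unfolding R_def by auto
    also have "\<dots> \<longleftrightarrow> (\<lambda>i. R (wnd x i)) \<in> parity_lang 0 (2*k)"
      unfolding parity_lang_iff using fy M by auto
    finally show "x \<in> lang_pow k (parity_lang 0 2) \<longleftrightarrow> (\<lambda>i. R (wnd x i)) \<in> parity_lang 0 (2*k)" .
  qed
qed

definition ck :: "nat \<Rightarrow> nat \<Rightarrow> nat \<Rightarrow> nat" where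
  "ck k a = (\<lambda>j. if j < k then (if j < a div 2 then 2 else if j = a div 2 then a mod 2 else 0) else 0)"

lemma ck_T: "ck k a \<in> tuple_alph k {0..2}"
  unfolding ck_def tuple_alph_def by auto

lemma ck_mono: "a \<le> b \<Longrightarrow> ck k a j \<le> ck k b j"
proof -
  assume ab: "a \<le> b"
  have "a div 2 \<le> b div 2" using ab by (rule div_le_mono)
  moreover have "a div 2 = b div 2 \<Longrightarrow> a mod 2 \<le> b mod 2" using ab
    by (metis add_le_cancel_left div_mult_mod_eq)
  moreover have "a mod 2 \<le> 2" by auto
  ultimately show ?thesis unfolding ck_def by auto
qed

lemma ck_par: "a \<le> 2 * k \<Longrightarrow> (\<forall>j<k. even (ck k a j)) \<longleftrightarrow> even a"
proof
  assume a: "a \<le> 2 * k" and e: "\<forall>j<k. even (ck k a j)"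
  show "even a"
  proof (rule ccontr)
    assume o: "odd a"
    then have "a div 2 < k" using a by presburger
    then have "even (ck k a (a div 2))" using e by auto
    then show False using o \<open>a div 2 < k\<close> unfolding ck_def by (auto simp: odd_iff_mod_2_eq_one)
  qed
next
  assume "even a"
  then show "\<forall>j<k. even (ck k a j)" unfolding ck_def by auto
qed

lemma part2_ge:
  fixes k :: nat
  shows "wadge_le {0..2*k} (parity_lang 0 (2*k)) (tuple_alph k {0..2}) (lang_pow k (parity_lang 0 2))"
proof -
  let ?T = "tuple_alph k {0..(2::nat)}"
  show ?thesis unfolding wadge_le_def
  proof (intro exI conjI ballI)
    show "wcont {0..2*k} ?T (\<lambda>x i. ck k (x i))" by (rule wcont_letter) (rule ck_T)
  next
    fix z assume z: "z \<in> words {0..2*k}"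
    define S where "S = {a\<in>{0..2*k}. infinite {i. z i = a}}"
    have fC: "finite {0..2*k}" by auto
    have Sne: "S \<noteq> {}" using ex_inf_letter[OF fC z] unfolding S_def by blast
    have SC: "S \<subseteq> {0..2*k}" by (auto simp: S_def)
    have fS: "finite S" using SC finite_subset by auto
    have MS: "Max S \<in> {0..2*k}" using Max_in[OF fS Sne] SC by auto
    have im: "(\<lambda>a. ck k a j) ` {0..2*k} \<subseteq> {0..2}" for j unfolding ck_def by auto
    have e: "{c\<in>{0..2}. infinite {i. ck k (z i) j = c}} = (\<lambda>a. ck k a j) ` S" for j
      unfolding S_def by (rule infset_image[OF fC z im])
    have mm: "Max ((\<lambda>a. ck k a j) ` S) = ck k (Max S) j" for j
      by (rule max_image_mono[OF fS Sne]) (rule ck_mono)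
    have w: "(\<lambda>i. ck k (z i) j) \<in> words {0..2}" for j
      unfolding words_def ck_def by auto
    have "(\<lambda>i. ck k (z i)) \<in> lang_pow k (parity_lang 0 2) \<longleftrightarrow> (\<forall>j<k. even (ck k (Max S) j))"
      unfolding lang_pow_def parity_lang_iff mem_Collect_eq using e w mm by simp
    also have "\<dots> \<longleftrightarrow> even (Max S)" using ck_par MS by auto
    also have "\<dots> \<longleftrightarrow> z \<in> parity_lang 0 (2*k)" unfolding parity_lang_iff S_def using z by simp
    finally show "z \<in> parity_lang 0 (2*k) \<longleftrightarrow> (\<lambda>i. ck k (z i)) \<in> lang_pow k (parity_lang 0 2)"
      by simp
  qed
qed

theorem lemma8p2:
  shows "(\<forall>\<iota>1 \<kappa>1 \<iota>2 \<kappa>2. \<iota>1 \<le> \<kappa>1 \<longrightarrow> \<iota>2 \<le> \<kappa>2 \<longrightarrow>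
            wadge_eq ({\<iota>1..\<kappa>1} \<times> {\<iota>2..\<kappa>2}) (lang_prod (parity_lang \<iota>1 \<kappa>1) (parity_lang \<iota>2 \<kappa>2))
                     {fst (chain_meet (\<iota>1, \<kappa>1) (\<iota>2, \<kappa>2)) .. snd (chain_meet (\<iota>1, \<kappa>1) (\<iota>2, \<kappa>2))}
                     (parity_lang (fst (chain_meet (\<iota>1, \<kappa>1) (\<iota>2, \<kappa>2))) (snd (chain_meet (\<iota>1, \<kappa>1) (\<iota>2, \<kappa>2)))))
       \<and> (\<forall>k::nat. k \<ge> 1 \<longrightarrow>
            wadge_eq (tuple_alph k {0..2}) (lang_pow k (parity_lang 0 2))
                     {0..2*k} (parity_lang 0 (2*k)))"
proof (intro conjI allI impI)
  fix i1 k1 i2 k2 :: nat assume h1: "i1 \<le> k1" and h2: "i2 \<le> k2"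
  show "wadge_eq ({i1..k1} \<times> {i2..k2}) (lang_prod (parity_lang i1 k1) (parity_lang i2 k2))
                     {fst (chain_meet (i1, k1) (i2, k2)) .. snd (chain_meet (i1, k1) (i2, k2))}
                     (parity_lang (fst (chain_meet (i1, k1) (i2, k2))) (snd (chain_meet (i1, k1) (i2, k2))))"
    unfolding wadge_eq_def using part1_le[OF h1 h2] part1_ge[OF h1 h2] by (rule conjI)
next
  fix k :: nat assume "k \<ge> 1"
  show "wadge_eq (tuple_alph k {0..2}) (lang_pow k (parity_lang 0 2)) {0..2*k} (parity_lang 0 (2*k))"
    unfolding wadge_eq_def using part2_le part2_ge by (rule conjI)
qed

end
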